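(* A monomial $f\in k[x_0, \dots, x_{n+1}]$ is in $I_{B_n}^{(m)}$ if and only if \[ \min\{w_{0,S}(f), w_{n+1,S}(f)\}\geq m \quad \text{for all subtrees } S \text{ of } Q_n \text{ with } n-2 \text{ vertices}. \]
   Context: Let $k$ be a field. Let $Q_n$ be an $n$-gon in $\mathbb{R}^2$ with vertices labeled $1,\dots,n$, containing the origin and embedded in $\mathbb{R}^3$, and let $B_n=\mathrm{conv}(Q_n,(0,0,1),(0,0,-1))$ be the bipyramid over $Q_n$, whose two extra vertices $(0,0,1)$ and $(0,0,-1)$ are labeled $0$ and $n+1$. Regard $B_n$ as a simplicial complex on vertices $\{0,1,\dots,n+1\}$ and let $I_{B_n}\subset k[x_0,\dots,x_{n+1}]$ be its Stanley-Reisner ideal, i.e. the ideal generated by the squarefree monomials $\prod_{i\in\tau}x_i$ with $\tau$ a non-face of $B_n$. For a homogeneous ideal $I$, the $m$-th symbolic power is $I^{(m)}=R\cap\bigcap_{P\in \mathrm{Ass}(I)} I^mR_P$. For a subtree $S$ of the $n$-gon $Q_n$ having $n-2$ vertices and a monomial $f=x_0^{a_0}x_1^{a_1}\cdots x_{n+1}^{a_{n+1}}$, define the weights $w_{0,S}(f)=\sum_{i\in S}a_i+a_0$ and $w_{n+1,S}(f)=\sum_{i\in S}a_i+a_{n+1}$ (sums over the vertices of $S$). *)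

theory Defs
  imports Main "HOL-Library.Poly_Mapping"
begin

(* Polynomials over a field k in variables x_i (i :: nat), as finitely supported maps
  from exponent vectors to coefficients. The ring k[x_0,...,x_{n+1}] is the
  subring of those polynomials whose monomials only involve variables 0..n+1. *)

type_synonym 'k mpoly = "(nat \<Rightarrow>\<^sub>0 nat) \<Rightarrow>\<^sub>0 'k"

definition poly_ring :: "nat \<Rightarrow> ('k::field) mpoly set" where
  "poly_ring N = {p :: 'k mpoly. \<forall>mon \<in> Poly_Mapping.keys p. Poly_Mapping.keys mon \<subseteq> {..N}}"

definition monom :: "(nat \<Rightarrow>\<^sub>0 nat) \<Rightarrow> ('k::field) mpoly" where
  "monom a = Poly_Mapping.single a 1"

definition is_ideal :: "'a::comm_ring_1 set \<Rightarrow> 'a set \<Rightarrow> bool" where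
  "is_ideal R J \<longleftrightarrow> J \<subseteq> R \<and> 0 \<in> J \<and> (\<forall>x\<in>J. \<forall>y\<in>J. x + y \<in> J)
     \<and> (\<forall>r\<in>R. \<forall>x\<in>J. r * x \<in> J)"

definition ideal_gen :: "'a::comm_ring_1 set \<Rightarrow> 'a set \<Rightarrow> 'a set" where
  "ideal_gen R G = \<Inter>{J. is_ideal R J \<and> G \<subseteq> J}"

fun ideal_pow :: "'a::comm_ring_1 set \<Rightarrow> 'a set \<Rightarrow> nat \<Rightarrow> 'a set" where
  "ideal_pow R I 0 = R"
| "ideal_pow R I (Suc m) = ideal_gen R {x * y | x y. x \<in> ideal_pow R I m \<and> y \<in> I}"

definition is_prime_ideal :: "'a::comm_ring_1 set \<Rightarrow> 'a set \<Rightarrow> bool" where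
  "is_prime_ideal R P \<longleftrightarrow> is_ideal R P \<and> P \<noteq> R
     \<and> (\<forall>a\<in>R. \<forall>b\<in>R. a * b \<in> P \<longrightarrow> a \<in> P \<or> b \<in> P)"

definition ass_primes :: "'a::comm_ring_1 set \<Rightarrow> 'a set \<Rightarrow> 'a set set" where
  "ass_primes R I = {P. is_prime_ideal R P \<and> (\<exists>g\<in>R. P = {r\<in>R. r * g \<in> I})}"

(* m-th symbolic power R \<inter> \<Inter>_{P \<in> Ass I} I^m R_P, where (R a domain)
  R \<inter> I^m R_P = {f \<in> R. \<exists>s \<in> R - P. s f \<in> I^m}. *)
definition symbolic_power :: "'a::comm_ring_1 set \<Rightarrow> 'a set \<Rightarrow> nat \<Rightarrow> 'a set" where
  "symbolic_power R I m =
     {f \<in> R. \<forall>P \<in> ass_primes R I. \<exists>s \<in> R - P. s * f \<in> ideal_pow R I m}"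

(* The n-gon Q_n as the cycle graph on 1..n (vertices labelled in cyclic order). *)
definition cyc_succ :: "nat \<Rightarrow> nat \<Rightarrow> nat" where
  "cyc_succ n i = i mod n + 1"

definition cyc_adj :: "nat \<Rightarrow> nat \<Rightarrow> nat \<Rightarrow> bool" where
  "cyc_adj n i j \<longleftrightarrow> i \<in> {1..n} \<and> j \<in> {1..n} \<and> (j = cyc_succ n i \<or> i = cyc_succ n j)"

(* Vertex sets of subtrees of Q_n: nonempty vertex sets connected within the cycle
  (each such set carries a spanning tree, and every subtree has such a vertex set). *)
definition subtree_vertices :: "nat \<Rightarrow> nat set \<Rightarrow> bool" where
  "subtree_vertices n S \<longleftrightarrow> S \<noteq> {} \<and> S \<subseteq> {1..n} \<and>
     (\<forall>i\<in>S. \<forall>j\<in>S. (i, j) \<in> {(u, v). u \<in> S \<and> v \<in> S \<and> cyc_adj n u v}\<^sup>*)"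

definition bipyr_facets :: "nat \<Rightarrow> nat set set" where
  "bipyr_facets n = {{0, i, cyc_succ n i} | i. i \<in> {1..n}}
                  \<union> {{n + 1, i, cyc_succ n i} | i. i \<in> {1..n}}"

definition bipyr_face :: "nat \<Rightarrow> nat set \<Rightarrow> bool" where
  "bipyr_face n \<tau> \<longleftrightarrow> (\<exists>F \<in> bipyr_facets n. \<tau> \<subseteq> F)"

definition sqfree_monom :: "nat set \<Rightarrow> ('k::field) mpoly" where
  "sqfree_monom \<tau> = monom (\<Sum>i\<in>\<tau>. Poly_Mapping.single i 1)"

definition SR_ideal_bipyr :: "nat \<Rightarrow> ('k::field) mpoly set" where
  "SR_ideal_bipyr n = ideal_gen (poly_ring (n + 1))
     {sqfree_monom \<tau> | \<tau>. \<tau> \<subseteq> {0..n + 1} \<and> \<not> bipyr_face n \<tau>}"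

definition w0 :: "nat \<Rightarrow> nat set \<Rightarrow> (nat \<Rightarrow>\<^sub>0 nat) \<Rightarrow> nat" where
  "w0 n S a = (\<Sum>i\<in>S. Poly_Mapping.lookup a i) + Poly_Mapping.lookup a 0"

definition wn1 :: "nat \<Rightarrow> nat set \<Rightarrow> (nat \<Rightarrow>\<^sub>0 nat) \<Rightarrow> nat" where
  "wn1 n S a = (\<Sum>i\<in>S. Poly_Mapping.lookup a i) + Poly_Mapping.lookup a (n + 1)"

end

theory Submission
  imports Defs
begin


lemma keys_add_nat: "Poly_Mapping.keys (a + b :: 'x \<Rightarrow>\<^sub>0 nat) = Poly_Mapping.keys a \<union> Poly_Mapping.keys b"
  by (auto simp: in_keys_iff lookup_add)

lemma polyring_add: "p \<in> poly_ring N \<Longrightarrow> q \<in> poly_ring N \<Longrightarrow> p + q \<in> poly_ring N"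
  unfolding poly_ring_def using keys_add[of p q] by blast

lemma polyring_mult: "p \<in> poly_ring N \<Longrightarrow> q \<in> poly_ring N \<Longrightarrow> p * q \<in> poly_ring N"
proof -
  assume p: "p \<in> poly_ring N" and q: "q \<in> poly_ring N"
  show ?thesis unfolding poly_ring_def mem_Collect_eq
  proof (intro ballI)
    fix mon assume "mon \<in> Poly_Mapping.keys (p * q)"
    then obtain a b where ab: "mon = a + b" "a \<in> Poly_Mapping.keys p" "b \<in> Poly_Mapping.keys q"
      using keys_mult[of p q] by blast
    have "Poly_Mapping.keys a \<subseteq> {..N}" "Poly_Mapping.keys b \<subseteq> {..N}"
      using p q ab unfolding poly_ring_def by auto
    then show "Poly_Mapping.keys mon \<subseteq> {..N}" using ab(1) by (simp add: keys_add_nat)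
  qed
qed

lemma polyring_zero: "0 \<in> poly_ring N" unfolding poly_ring_def by simp
lemma polyring_one: "1 \<in> poly_ring N" unfolding poly_ring_def by simp
lemma polyring_single: "Poly_Mapping.keys k \<subseteq> {..N} \<Longrightarrow> Poly_Mapping.single k c \<in> poly_ring N"
  unfolding poly_ring_def by simp
lemma polyring_monom: "Poly_Mapping.keys k \<subseteq> {..N} \<Longrightarrow> monom k \<in> poly_ring N"
  unfolding monom_def by (rule polyring_single)
lemma polyring_m1: "(-1 :: 'k::field mpoly) \<in> poly_ring N"
proof -
  have "(-1 :: 'k::field mpoly) = Poly_Mapping.single 0 (-1)"
    by (metis single_one single_uminus)
  then show ?thesis using polyring_single[of 0 N "-1::'k"] by simp
qed

lemma ideal_sub:
  assumes "is_ideal (poly_ring N) J" "x \<in> J" "y \<in> J"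
  shows "x - y \<in> (J :: 'k::field mpoly set)"
proof -
  have "(-1) * y \<in> J" using assms polyring_m1 unfolding is_ideal_def by blast
  then have "x + (-1) * y \<in> J" using assms unfolding is_ideal_def by blast
  then show ?thesis by simp
qed

lemma ideal_sum:
  assumes "is_ideal R J" "finite A" "\<And>x. x \<in> A \<Longrightarrow> f x \<in> J"
  shows "sum f A \<in> J"
  using assms(2,3)
proof (induction A rule: finite_induct)
  case empty then show ?case using assms(1) unfolding is_ideal_def by simp
next
  case (insert x F) then show ?case using assms(1) unfolding is_ideal_def by simp
qed

lemma ideal_R: "is_ideal (poly_ring N) (poly_ring N :: 'k::field mpoly set)"
  unfolding is_ideal_def using polyring_add polyring_mult polyring_zero by blast

lemma ideal_gen_ideal:
  assumes "G \<subseteq> poly_ring N"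
  shows "is_ideal (poly_ring N) (ideal_gen (poly_ring N) (G :: 'k::field mpoly set))"
  unfolding is_ideal_def
proof (intro conjI ballI)
  let ?F = "{J. is_ideal (poly_ring N) J \<and> G \<subseteq> J}"
  have R: "poly_ring N \<in> ?F" using assms ideal_R by blast
  show "ideal_gen (poly_ring N) G \<subseteq> poly_ring N" unfolding ideal_gen_def using R by blast
  show "0 \<in> ideal_gen (poly_ring N) G" unfolding ideal_gen_def is_ideal_def by blast
  show "x + y \<in> ideal_gen (poly_ring N) G" if "x \<in> ideal_gen (poly_ring N) G" "y \<in> ideal_gen (poly_ring N) G" for x y
    using that unfolding ideal_gen_def is_ideal_def by blast
  show "r * x \<in> ideal_gen (poly_ring N) G" if "r \<in> poly_ring N" "x \<in> ideal_gen (poly_ring N) G" for r x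
    using that unfolding ideal_gen_def is_ideal_def by blast
qed

lemma ideal_gen_sup: "G \<subseteq> ideal_gen R G"
  unfolding ideal_gen_def by auto

lemma ideal_gen_least: "is_ideal R J \<Longrightarrow> G \<subseteq> J \<Longrightarrow> ideal_gen R G \<subseteq> J"
  unfolding ideal_gen_def by auto

lemma ideal_pow_R:
  assumes "I \<subseteq> poly_ring N"
  shows "ideal_pow (poly_ring N) I m \<subseteq> (poly_ring N :: 'k::field mpoly set)"
proof (induction m)
  case 0 then show ?case by simp
next
  case (Suc m)
  have "{x * y |x y. x \<in> ideal_pow (poly_ring N) I m \<and> y \<in> I} \<subseteq> poly_ring N"
    using Suc assms polyring_mult by blast
  then show ?case using ideal_gen_least[OF ideal_R] by simp
qed

definition ind :: "nat set \<Rightarrow> (nat \<Rightarrow>\<^sub>0 nat)" where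
  "ind \<tau> = (\<Sum>i\<in>\<tau>. Poly_Mapping.single i 1)"

lemma lookup_ind: "finite \<tau> \<Longrightarrow> Poly_Mapping.lookup (ind \<tau>) j = (if j \<in> \<tau> then 1 else 0)"
  unfolding ind_def by (simp add: lookup_sum lookup_single when_def)

lemma keys_ind: "finite \<tau> \<Longrightarrow> Poly_Mapping.keys (ind \<tau>) = \<tau>"
  by (auto simp: in_keys_iff lookup_ind split: if_splits)

lemma poly_decomp: "p = (\<Sum>k\<in>Poly_Mapping.keys p. Poly_Mapping.single k (Poly_Mapping.lookup p k))"
proof (rule poly_mapping_eqI)
  fix j
  show "Poly_Mapping.lookup p j = Poly_Mapping.lookup (\<Sum>k\<in>Poly_Mapping.keys p. Poly_Mapping.single k (Poly_Mapping.lookup p k)) j"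
    by (auto simp: lookup_sum lookup_single when_def in_keys_iff)
qed

lemma lookup_mult_single:
  fixes p :: "'k::field mpoly"
  shows "Poly_Mapping.lookup (p * Poly_Mapping.single g c) (k + g) = Poly_Mapping.lookup p k * c"
proof -
  have e: "(\<Sum>l\<in>Poly_Mapping.keys p. Poly_Mapping.single l (Poly_Mapping.lookup p l)) = p"
    by (rule poly_decomp[symmetric])
  have "p * Poly_Mapping.single g c = (\<Sum>l\<in>Poly_Mapping.keys p. Poly_Mapping.single l (Poly_Mapping.lookup p l)) * Poly_Mapping.single g c"
    by (simp only: e)
  also have "\<dots> = (\<Sum>l\<in>Poly_Mapping.keys p. Poly_Mapping.single (l + g) (Poly_Mapping.lookup p l * c))"
    by (simp add: sum_distrib_right mult_single)
  finally have "Poly_Mapping.lookup (p * Poly_Mapping.single g c) (k + g) =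
      (\<Sum>l\<in>Poly_Mapping.keys p. Poly_Mapping.lookup p l * c when l = k)"
    by (simp add: lookup_sum lookup_single)
  also have "\<dots> = Poly_Mapping.lookup p k * c"
    by (auto simp: when_def in_keys_iff)
  finally show ?thesis .
qed

lemma keys_mult_monom:
  fixes p :: "'k::field mpoly"
  shows "Poly_Mapping.keys (p * monom g) = (\<lambda>k. k + g) ` Poly_Mapping.keys p"
proof
  show "Poly_Mapping.keys (p * monom g) \<subseteq> (\<lambda>k. k + g) ` Poly_Mapping.keys p"
    using keys_mult[of p "monom g"] unfolding monom_def by auto
  show "(\<lambda>k. k + g) ` Poly_Mapping.keys p \<subseteq> Poly_Mapping.keys (p * monom g)"
    unfolding monom_def by (auto simp: in_keys_iff lookup_mult_single)
qed

definition wt :: "nat \<Rightarrow> nat set \<Rightarrow> (nat \<Rightarrow>\<^sub>0 nat) \<Rightarrow> nat" where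
  "wt N F k = (\<Sum>j\<in>{..N} - F. Poly_Mapping.lookup k j)"

lemma wt_add: "wt N F (a + b) = wt N F a + wt N F b"
  unfolding wt_def by (simp add: lookup_add sum.distrib)

lemma wt_pos_iff:
  assumes "Poly_Mapping.keys k \<subseteq> {..N}"
  shows "(1 \<le> wt N F k) \<longleftrightarrow> \<not> Poly_Mapping.keys k \<subseteq> F"
proof
  assume "1 \<le> wt N F k"
  then have "wt N F k \<noteq> 0" by simp
  then obtain j where "j \<in> {..N} - F" "Poly_Mapping.lookup k j \<noteq> 0"
    unfolding wt_def by (meson sum.neutral)
  then show "\<not> Poly_Mapping.keys k \<subseteq> F" by (metis DiffD2 in_keys_iff subsetD)
next
  assume "\<not> Poly_Mapping.keys k \<subseteq> F"
  then obtain j where j: "j \<in> Poly_Mapping.keys k" "j \<notin> F" by blast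
  then have jj: "j \<in> {..N} - F" using assms by auto
  have "Poly_Mapping.lookup k j \<le> wt N F k"
    unfolding wt_def by (rule member_le_sum[OF jj]) auto
  then show "1 \<le> wt N F k" using j by (simp add: in_keys_iff)
qed

definition JF :: "nat \<Rightarrow> nat set \<Rightarrow> nat \<Rightarrow> 'k::field mpoly set" where
  "JF N F m = {p \<in> poly_ring N. \<forall>k\<in>Poly_Mapping.keys p. m \<le> wt N F k}"

lemma JF_0: "JF N F 0 = poly_ring N"
  unfolding JF_def by auto

lemma JF_mult:
  assumes x: "x \<in> JF N F m1" and y: "y \<in> JF N F m2"
  shows "x * y \<in> JF N F (m1 + m2)"
  unfolding JF_def
proof (intro CollectI conjI ballI)
  show "x * y \<in> poly_ring N" using x y polyring_mult unfolding JF_def by blast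
  fix k assume "k \<in> Poly_Mapping.keys (x * y)"
  then obtain a b where ab: "k = a + b" "a \<in> Poly_Mapping.keys x" "b \<in> Poly_Mapping.keys y"
    using keys_mult[of x y] by blast
  have "m1 \<le> wt N F a" "m2 \<le> wt N F b" using x y ab unfolding JF_def by auto
  then show "m1 + m2 \<le> wt N F k" using ab(1) by (simp add: wt_add)
qed

lemma JF_ideal: "is_ideal (poly_ring N) (JF N F m :: 'k::field mpoly set)"
  unfolding is_ideal_def
proof (intro conjI ballI)
  show "JF N F m \<subseteq> poly_ring N" unfolding JF_def by auto
  show "0 \<in> JF N F m" unfolding JF_def using polyring_zero by auto
  fix x :: "'k mpoly" assume x: "x \<in> JF N F m"
  {
    fix y :: "'k mpoly" assume y: "y \<in> JF N F m"
    show "x + y \<in> JF N F m" unfolding JF_def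
    proof (intro CollectI conjI ballI)
      show "x + y \<in> poly_ring N" using x y polyring_add unfolding JF_def by blast
      fix k assume "k \<in> Poly_Mapping.keys (x + y)"
      then have "k \<in> Poly_Mapping.keys x \<or> k \<in> Poly_Mapping.keys y" using keys_add[of x y] by blast
      then show "m \<le> wt N F k" using x y unfolding JF_def by auto
    qed
  }
  {
    fix r :: "'k mpoly" assume r: "r \<in> poly_ring N"
    have "r \<in> JF N F 0" using r JF_0 by blast
    then show "r * x \<in> JF N F m" using JF_mult[of r N F 0 x m] x by simp
  }
qed


lemma keys_empty_zero: "Poly_Mapping.keys p = {} \<Longrightarrow> p = 0"
  by (rule poly_mapping_eqI) (simp add: not_in_keys_iff_lookup_eq_zero)

lemma split_JF:
  fixes p :: "'k::field mpoly"
  assumes p: "p \<in> poly_ring N"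
  shows "\<exists>p0 p1. p = p0 + p1 \<and> p0 \<in> poly_ring N \<and> p1 \<in> JF N F 1 \<and>
     (\<forall>k\<in>Poly_Mapping.keys p0. wt N F k = 0) \<and> (p \<notin> JF N F 1 \<longrightarrow> p0 \<noteq> 0)"
proof -
  define p0 :: "'k mpoly" where "p0 = Poly_Mapping.mapp (\<lambda>k c. if wt N F k = 0 then c else 0) p"
  define p1 where "p1 = p - p0"
  have l0: "Poly_Mapping.lookup p0 k = (if wt N F k = 0 then Poly_Mapping.lookup p k else 0)" for k
    unfolding p0_def by (auto simp: Poly_Mapping.lookup_mapp when_def in_keys_iff)
  have l1: "Poly_Mapping.lookup p1 k = (if wt N F k = 0 then 0 else Poly_Mapping.lookup p k)" for k
    unfolding p1_def by (simp add: lookup_minus l0)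
  have k0: "Poly_Mapping.keys p0 \<subseteq> Poly_Mapping.keys p" "Poly_Mapping.keys p1 \<subseteq> Poly_Mapping.keys p"
    by (auto simp: in_keys_iff l0 l1 split: if_splits)
  have "p = p0 + p1" unfolding p1_def by simp
  moreover have "p0 \<in> poly_ring N" using p k0 unfolding poly_ring_def by blast
  moreover have "p1 \<in> JF N F 1"
    unfolding JF_def
  proof (intro CollectI conjI ballI)
    show "p1 \<in> poly_ring N" using p k0 unfolding poly_ring_def by blast
    fix k assume "k \<in> Poly_Mapping.keys p1"
    then have "wt N F k \<noteq> 0" by (auto simp: in_keys_iff l1 split: if_splits)
    then show "1 \<le> wt N F k" by simp
  qed
  moreover have "\<forall>k\<in>Poly_Mapping.keys p0. wt N F k = 0"
    by (auto simp: in_keys_iff l0 split: if_splits)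
  moreover have "p0 \<noteq> 0" if np: "p \<notin> JF N F 1"
  proof -
    obtain k where k: "k \<in> Poly_Mapping.keys p" "\<not> 1 \<le> wt N F k"
      using np p unfolding JF_def by blast
    then have "Poly_Mapping.lookup p0 k \<noteq> 0" by (simp add: l0 in_keys_iff)
    then show ?thesis by auto
  qed
  ultimately show ?thesis by blast
qed

lemma JF_prime: "is_prime_ideal (poly_ring N) (JF N F 1 :: 'k::field mpoly set)"
  unfolding is_prime_ideal_def
proof (intro conjI ballI impI)
  show "is_ideal (poly_ring N) (JF N F 1 :: 'k::field mpoly set)" by (rule JF_ideal)
  have "(1::'k mpoly) \<notin> JF N F 1"
    unfolding JF_def by (simp add: wt_def)
  then show "JF N F 1 \<noteq> (poly_ring N :: 'k mpoly set)" using polyring_one by blast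
  fix a b :: "'k mpoly"
  assume a: "a \<in> poly_ring N" and b: "b \<in> poly_ring N" and ab: "a * b \<in> JF N F 1"
  show "a \<in> JF N F 1 \<or> b \<in> JF N F 1"
  proof (rule ccontr)
    assume c: "\<not> (a \<in> JF N F 1 \<or> b \<in> JF N F 1)"
    obtain a0 a1 where A: "a = a0 + a1" "a0 \<in> poly_ring N" "a1 \<in> JF N F 1"
      "\<forall>k\<in>Poly_Mapping.keys a0. wt N F k = 0" "a0 \<noteq> 0"
      using split_JF[OF a, of F] c by blast
    obtain b0 b1 where B: "b = b0 + b1" "b0 \<in> poly_ring N" "b1 \<in> JF N F 1"
      "\<forall>k\<in>Poly_Mapping.keys b0. wt N F k = 0" "b0 \<noteq> 0"
      using split_JF[OF b, of F] c by blast
    have I: "is_ideal (poly_ring N) (JF N F 1 :: 'k mpoly set)" by (rule JF_ideal)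
    have r1: "a0 * b1 \<in> JF N F 1" using I A(2) B(3) unfolding is_ideal_def by blast
    have r2: "b * a1 \<in> JF N F 1" using I b A(3) unfolding is_ideal_def by blast
    have rest: "a0 * b1 + b * a1 \<in> JF N F 1" using I r1 r2 unfolding is_ideal_def by blast
    have eq: "a0 * b0 = a * b - (a0 * b1 + b * a1)"
      using A(1) B(1) by (simp add: algebra_simps)
    have inJ: "a0 * b0 \<in> JF N F 1" unfolding eq by (rule ideal_sub[OF I ab rest])
    have "Poly_Mapping.keys (a0 * b0) = {}"
    proof (rule ccontr)
      assume "Poly_Mapping.keys (a0 * b0) \<noteq> {}"
      then obtain k where k: "k \<in> Poly_Mapping.keys (a0 * b0)" by blast
      then obtain u v where uv: "k = u + v" "u \<in> Poly_Mapping.keys a0" "v \<in> Poly_Mapping.keys b0"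
        using keys_mult[of a0 b0] by blast
      have "wt N F k = 0" using uv A(4) B(4) by (simp add: wt_add)
      moreover have "1 \<le> wt N F k" using inJ k unfolding JF_def by blast
      ultimately show False by simp
    qed
    then have "a0 * b0 = 0" by (rule keys_empty_zero)
    then show False using A(5) B(5) by simp
  qed
qed


lemma cyc_succ_eq: "i \<in> {1..n} \<Longrightarrow> cyc_succ n i = (if i = n then 1 else i + 1)"
  unfolding cyc_succ_def by auto

lemma facet_cases:
  assumes "F \<in> bipyr_facets n"
  obtains i where "i \<in> {1..n}" "F = {0, i, cyc_succ n i}" | i where "i \<in> {1..n}" "F = {n + 1, i, cyc_succ n i}"
  using assms unfolding bipyr_facets_def by blast

lemma facet_props:
  assumes "n \<ge> 3" "F \<in> bipyr_facets n"
  shows "F \<subseteq> {..n+1}" "finite F" "card F = 3"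
proof -
  from assms(2) show "F \<subseteq> {..n+1}"
    by (cases rule: facet_cases) (auto simp: cyc_succ_eq)
  from assms(2) show "finite F"
    by (cases rule: facet_cases) auto
  from assms(2) show "card F = 3"
  proof (cases rule: facet_cases)
    case (1 i) then show ?thesis using assms(1) by (auto simp: cyc_succ_eq)
  next
    case (2 i) then show ?thesis using assms(1) by (auto simp: cyc_succ_eq)
  qed
qed

lemma face_mono: "bipyr_face n \<tau> \<Longrightarrow> \<sigma> \<subseteq> \<tau> \<Longrightarrow> bipyr_face n \<sigma>"
  unfolding bipyr_face_def by blast

lemma facet_face: "F \<in> bipyr_facets n \<Longrightarrow> bipyr_face n F"
  unfolding bipyr_face_def by blast

lemma insert_nonface:
  assumes "n \<ge> 3" "F \<in> bipyr_facets n" "j \<notin> F"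
  shows "\<not> bipyr_face n (insert j F)"
proof
  assume "bipyr_face n (insert j F)"
  then obtain F' where F': "F' \<in> bipyr_facets n" "insert j F \<subseteq> F'" unfolding bipyr_face_def by blast
  have "card (insert j F) \<le> card F'" using F' facet_props[OF assms(1) F'(1)] by (intro card_mono) auto
  moreover have "card (insert j F) = 4" using facet_props[OF assms(1,2)] assms(3) by simp
  ultimately show False using facet_props[OF assms(1) F'(1)] by simp
qed

definition NF :: "nat \<Rightarrow> 'k::field mpoly set" where
  "NF n = {p \<in> poly_ring (n + 1). \<forall>k\<in>Poly_Mapping.keys p. \<not> bipyr_face n (Poly_Mapping.keys k)}"

lemma NF_ideal: "is_ideal (poly_ring (n + 1)) (NF n :: 'k::field mpoly set)"
  unfolding is_ideal_def
proof (intro conjI ballI)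
  show "NF n \<subseteq> poly_ring (n + 1)" unfolding NF_def by auto
  show "0 \<in> NF n" unfolding NF_def using polyring_zero by auto
  fix x :: "'k mpoly" assume x: "x \<in> NF n"
  {
    fix y :: "'k mpoly" assume y: "y \<in> NF n"
    show "x + y \<in> NF n" unfolding NF_def
    proof (intro CollectI conjI ballI)
      show "x + y \<in> poly_ring (n + 1)" using x y polyring_add unfolding NF_def by blast
      fix k assume "k \<in> Poly_Mapping.keys (x + y)"
      then have "k \<in> Poly_Mapping.keys x \<or> k \<in> Poly_Mapping.keys y" using keys_add[of x y] by blast
      then show "\<not> bipyr_face n (Poly_Mapping.keys k)" using x y unfolding NF_def by auto
    qed
  }
  {
    fix r :: "'k mpoly" assume r: "r \<in> poly_ring (n + 1)"
    show "r * x \<in> NF n" unfolding NF_def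
    proof (intro CollectI conjI ballI)
      show "r * x \<in> poly_ring (n + 1)" using x r polyring_mult unfolding NF_def by blast
      fix k assume "k \<in> Poly_Mapping.keys (r * x)"
      then obtain a b where ab: "k = a + b" "a \<in> Poly_Mapping.keys r" "b \<in> Poly_Mapping.keys x"
        using keys_mult[of r x] by blast
      have "\<not> bipyr_face n (Poly_Mapping.keys b)" using x ab unfolding NF_def by auto
      then show "\<not> bipyr_face n (Poly_Mapping.keys k)" using ab(1) face_mono[of n _ "Poly_Mapping.keys b"]
        by (auto simp: keys_add_nat)
    qed
  }
qed

lemma sqfree_monom_ind: "sqfree_monom \<tau> = monom (ind \<tau>)"
  unfolding sqfree_monom_def ind_def by simp

lemma gens_R: "{sqfree_monom \<tau> | \<tau>. \<tau> \<subseteq> {0..n + 1} \<and> \<not> bipyr_face n \<tau>} \<subseteq> (poly_ring (n + 1) :: 'k::field mpoly set)"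
proof
  fix x :: "'k mpoly" assume "x \<in> {sqfree_monom \<tau> | \<tau>. \<tau> \<subseteq> {0..n + 1} \<and> \<not> bipyr_face n \<tau>}"
  then obtain \<tau> where t: "x = sqfree_monom \<tau>" "\<tau> \<subseteq> {0..n + 1}" by blast
  have f: "finite \<tau>" using t(2) finite_subset by blast
  show "x \<in> poly_ring (n + 1)" unfolding t(1) sqfree_monom_ind
    by (rule polyring_monom) (use t(2) f in \<open>auto simp: keys_ind\<close>)
qed

lemma SR_ideal: "is_ideal (poly_ring (n + 1)) (SR_ideal_bipyr n :: 'k::field mpoly set)"
  unfolding SR_ideal_bipyr_def by (rule ideal_gen_ideal[OF gens_R])

lemma gen_in_SR:
  assumes "\<tau> \<subseteq> {0..n + 1}" "\<not> bipyr_face n \<tau>"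
  shows "(sqfree_monom \<tau> :: 'k::field mpoly) \<in> SR_ideal_bipyr n"
  unfolding SR_ideal_bipyr_def by (rule subsetD[OF ideal_gen_sup]) (use assms in blast)

lemma monom_add: "(monom a :: 'k::field mpoly) * monom b = monom (a + b)"
  unfolding monom_def by (simp add: mult_single)

lemma SR_eq_NF: "(SR_ideal_bipyr n :: 'k::field mpoly set) = NF n"
proof
  show "(SR_ideal_bipyr n :: 'k mpoly set) \<subseteq> NF n"
    unfolding SR_ideal_bipyr_def
  proof (rule ideal_gen_least[OF NF_ideal])
    show "{sqfree_monom \<tau> | \<tau>. \<tau> \<subseteq> {0..n + 1} \<and> \<not> bipyr_face n \<tau>} \<subseteq> (NF n :: 'k mpoly set)"
    proof
      fix x :: "'k mpoly" assume "x \<in> {sqfree_monom \<tau> | \<tau>. \<tau> \<subseteq> {0..n + 1} \<and> \<not> bipyr_face n \<tau>}"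
      then obtain \<tau> where t: "x = sqfree_monom \<tau>" "\<tau> \<subseteq> {0..n + 1}" "\<not> bipyr_face n \<tau>" by blast
      have f: "finite \<tau>" using t(2) finite_subset by blast
      have "x \<in> poly_ring (n+1)" using gens_R t by blast
      then show "x \<in> NF n" using t f unfolding NF_def sqfree_monom_ind monom_def
        by (auto simp: keys_ind)
    qed
  qed
next
  show "NF n \<subseteq> (SR_ideal_bipyr n :: 'k mpoly set)"
  proof
    fix p :: "'k mpoly" assume p: "p \<in> NF n"
    have I: "is_ideal (poly_ring (n + 1)) (SR_ideal_bipyr n :: 'k mpoly set)" by (rule SR_ideal)
    have "(\<Sum>k\<in>Poly_Mapping.keys p. Poly_Mapping.single k (Poly_Mapping.lookup p k)) \<in> SR_ideal_bipyr n"
    proof (rule ideal_sum[OF I finite_keys])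
      fix k assume k: "k \<in> Poly_Mapping.keys p"
      define K where "K = Poly_Mapping.keys k"
      have K: "K \<subseteq> {..n+1}" "\<not> bipyr_face n K" "finite K" using p k unfolding NF_def poly_ring_def K_def by auto
      have kk: "k - ind K + ind K = k"
        unfolding K_def by (rule poly_mapping_eqI) (auto simp: lookup_add lookup_minus lookup_ind in_keys_iff)
      have "Poly_Mapping.single k (Poly_Mapping.lookup p k) =
          (Poly_Mapping.single 0 (Poly_Mapping.lookup p k) * monom (k - ind K)) * sqfree_monom K"
        unfolding sqfree_monom_ind monom_def by (simp add: mult_single kk)
      moreover have "Poly_Mapping.single 0 (Poly_Mapping.lookup p k) * monom (k - ind K) \<in> poly_ring (n + 1)"
      proof (rule polyring_mult)
        show "Poly_Mapping.single 0 (Poly_Mapping.lookup p k) \<in> poly_ring (n + 1)"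
          by (rule polyring_single) simp
        have "Poly_Mapping.keys (k - ind K) \<subseteq> K" by (auto simp: in_keys_iff lookup_minus K_def)
        then show "monom (k - ind K) \<in> poly_ring (n + 1)" using K(1) by (intro polyring_monom) auto
      qed
      moreover have "(sqfree_monom K :: 'k mpoly) \<in> SR_ideal_bipyr n"
        using K by (intro gen_in_SR) auto
      ultimately show "Poly_Mapping.single k (Poly_Mapping.lookup p k) \<in> SR_ideal_bipyr n"
        using I unfolding is_ideal_def by metis
    qed
    then show "p \<in> SR_ideal_bipyr n" using poly_decomp[of p] by simp
  qed
qed


lemma NF_sub_JF:
  assumes "n \<ge> 3" "F \<in> bipyr_facets n"
  shows "(NF n :: 'k::field mpoly set) \<subseteq> JF (n + 1) F 1"
proof
  fix p :: "'k mpoly" assume p: "p \<in> NF n"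
  show "p \<in> JF (n + 1) F 1" unfolding JF_def
  proof (intro CollectI conjI ballI)
    show "p \<in> poly_ring (n + 1)" using p unfolding NF_def by blast
    fix k assume k: "k \<in> Poly_Mapping.keys p"
    have kN: "Poly_Mapping.keys k \<subseteq> {..n + 1}" using p k unfolding NF_def poly_ring_def by blast
    have "\<not> bipyr_face n (Poly_Mapping.keys k)" using p k unfolding NF_def by blast
    then have "\<not> Poly_Mapping.keys k \<subseteq> F" using face_mono facet_face[OF assms(2)] by blast
    then show "1 \<le> wt (n + 1) F k" using wt_pos_iff[OF kN] by blast
  qed
qed

lemma allJF_NF:
  assumes "p \<in> poly_ring (n + 1)" "\<forall>F\<in>bipyr_facets n. p \<in> JF (n + 1) F 1"
  shows "(p :: 'k::field mpoly) \<in> NF n"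
  unfolding NF_def
proof (intro CollectI conjI ballI)
  show "p \<in> poly_ring (n + 1)" by fact
  fix k assume k: "k \<in> Poly_Mapping.keys p"
  have kN: "Poly_Mapping.keys k \<subseteq> {..n + 1}" using assms(1) k unfolding poly_ring_def by blast
  show "\<not> bipyr_face n (Poly_Mapping.keys k)"
  proof
    assume "bipyr_face n (Poly_Mapping.keys k)"
    then obtain F where F: "F \<in> bipyr_facets n" "Poly_Mapping.keys k \<subseteq> F" unfolding bipyr_face_def by blast
    have "1 \<le> wt (n + 1) F k" using assms(2) F(1) k unfolding JF_def by blast
    then show False using wt_pos_iff[OF kN] F(2) by blast
  qed
qed

lemma colon_eq:
  assumes "n \<ge> 3" "F \<in> bipyr_facets n"
  shows "{r \<in> poly_ring (n + 1). r * sqfree_monom F \<in> (NF n :: 'k::field mpoly set)} = JF (n + 1) F 1"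
proof -
  have fin: "finite F" and FN: "F \<subseteq> {..n+1}" using facet_props[OF assms] by auto
  have gR: "(sqfree_monom F :: 'k mpoly) \<in> poly_ring (n + 1)"
    unfolding sqfree_monom_ind by (rule polyring_monom) (use FN in \<open>simp add: keys_ind[OF fin]\<close>)
  have kk: "Poly_Mapping.keys (k + ind F) = Poly_Mapping.keys k \<union> F" for k
    by (simp add: keys_add_nat keys_ind[OF fin])
  show ?thesis
  proof (intro equalityI subsetI)
    fix r :: "'k mpoly" assume "r \<in> {r \<in> poly_ring (n + 1). r * sqfree_monom F \<in> NF n}"
    then have r: "r \<in> poly_ring (n + 1)" "r * monom (ind F) \<in> NF n" unfolding sqfree_monom_ind by auto
    show "r \<in> JF (n + 1) F 1" unfolding JF_def
    proof (intro CollectI conjI ballI)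
      show "r \<in> poly_ring (n + 1)" by fact
      fix k assume k: "k \<in> Poly_Mapping.keys r"
      have kN: "Poly_Mapping.keys k \<subseteq> {..n + 1}" using r(1) k unfolding poly_ring_def by blast
      have "k + ind F \<in> Poly_Mapping.keys (r * monom (ind F))" using k by (simp add: keys_mult_monom)
      then have "\<not> bipyr_face n (Poly_Mapping.keys (k + ind F))" using r(2) unfolding NF_def by blast
      then have "\<not> bipyr_face n (Poly_Mapping.keys k \<union> F)" unfolding kk .
      then have "\<not> Poly_Mapping.keys k \<subseteq> F" using facet_face[OF assms(2)]
        by (metis sup.absorb2)
      then show "1 \<le> wt (n + 1) F k" using wt_pos_iff[OF kN] by blast
    qed
  next
    fix r :: "'k mpoly" assume r: "r \<in> JF (n + 1) F 1"
    have rR: "r \<in> poly_ring (n + 1)" using r unfolding JF_def by blast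
    have "r * monom (ind F) \<in> NF n" unfolding NF_def
    proof (intro CollectI conjI ballI)
      show "r * monom (ind F) \<in> poly_ring (n + 1)" using polyring_mult[OF rR gR] unfolding sqfree_monom_ind .
      fix k' assume "k' \<in> Poly_Mapping.keys (r * monom (ind F))"
      then obtain k where k: "k' = k + ind F" "k \<in> Poly_Mapping.keys r" by (auto simp: keys_mult_monom)
      have kN: "Poly_Mapping.keys k \<subseteq> {..n + 1}" using rR k(2) unfolding poly_ring_def by blast
      have "1 \<le> wt (n + 1) F k" using r k(2) unfolding JF_def by blast
      then obtain j where j: "j \<in> Poly_Mapping.keys k" "j \<notin> F" using wt_pos_iff[OF kN] by blast
      have "\<not> bipyr_face n (insert j F)" by (rule insert_nonface[OF assms j(2)])
      moreover have "insert j F \<subseteq> Poly_Mapping.keys k \<union> F" using j by auto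
      ultimately show "\<not> bipyr_face n (Poly_Mapping.keys k')" unfolding k(1) kk using face_mono by blast
    qed
    then show "r \<in> {r \<in> poly_ring (n + 1). r * sqfree_monom F \<in> NF n}"
      using rR unfolding sqfree_monom_ind by auto
  qed
qed

lemma JF_ass:
  assumes "n \<ge> 3" "F \<in> bipyr_facets n"
  shows "(JF (n + 1) F 1 :: 'k::field mpoly set) \<in> ass_primes (poly_ring (n + 1)) (SR_ideal_bipyr n)"
proof -
  have fin: "finite F" and FN: "F \<subseteq> {..n+1}" using facet_props[OF assms] by auto
  have gR: "(sqfree_monom F :: 'k mpoly) \<in> poly_ring (n + 1)"
    unfolding sqfree_monom_ind by (rule polyring_monom) (use FN in \<open>simp add: keys_ind[OF fin]\<close>)
  show ?thesis unfolding ass_primes_def SR_eq_NF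
    using JF_prime colon_eq[OF assms, where 'k='k] gR by blast
qed

lemma ass_sub:
  assumes "n \<ge> 3" "P \<in> ass_primes (poly_ring (n + 1)) (SR_ideal_bipyr n :: 'k::field mpoly set)"
  shows "\<exists>F\<in>bipyr_facets n. P \<subseteq> JF (n + 1) F 1"
proof -
  obtain g where pr: "is_prime_ideal (poly_ring (n + 1)) P" and g: "g \<in> poly_ring (n + 1)"
    and P: "P = {r \<in> poly_ring (n + 1). r * g \<in> NF n}"
    using assms(2) unfolding ass_primes_def SR_eq_NF by blast
  have Pi: "is_ideal (poly_ring (n + 1)) P" and PR: "P \<noteq> poly_ring (n + 1)" using pr unfolding is_prime_ideal_def by auto
  have "\<exists>F\<in>bipyr_facets n. g \<notin> JF (n + 1) F 1"
  proof (rule ccontr)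
    assume "\<not> ?thesis"
    then have "g \<in> NF n" using allJF_NF[OF g] by blast
    then have "1 \<in> P" unfolding P using polyring_one by auto
    then have "poly_ring (n + 1) \<subseteq> P" using Pi unfolding is_ideal_def by (metis mult.right_neutral subsetI)
    moreover have "P \<subseteq> poly_ring (n + 1)" using Pi unfolding is_ideal_def by blast
    ultimately show False using PR by blast
  qed
  then obtain F where F: "F \<in> bipyr_facets n" "g \<notin> JF (n + 1) F 1" by blast
  have "P \<subseteq> JF (n + 1) F 1"
  proof
    fix r assume "r \<in> P"
    then have r: "r \<in> poly_ring (n + 1)" "r * g \<in> JF (n + 1) F 1" unfolding P using NF_sub_JF[OF assms(1) F(1)] by auto
    then show "r \<in> JF (n + 1) F 1" using JF_prime g F(2) unfolding is_prime_ideal_def by blast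
  qed
  then show ?thesis using F(1) by blast
qed

lemma pow_sub:
  assumes "n \<ge> 3" "F \<in> bipyr_facets n"
  shows "ideal_pow (poly_ring (n + 1)) (SR_ideal_bipyr n :: 'k::field mpoly set) m \<subseteq> JF (n + 1) F m"
proof (induction m)
  case 0 then show ?case by (simp add: JF_0)
next
  case (Suc m)
  have I1: "(SR_ideal_bipyr n :: 'k mpoly set) \<subseteq> JF (n + 1) F 1" unfolding SR_eq_NF by (rule NF_sub_JF[OF assms])
  have "{x * y |x y. x \<in> ideal_pow (poly_ring (n + 1)) (SR_ideal_bipyr n :: 'k mpoly set) m \<and> y \<in> SR_ideal_bipyr n}
      \<subseteq> JF (n + 1) F (Suc m)"
    using Suc I1 JF_mult[of _ "n+1" F m _ 1] by fastforce
  then show ?case by (simp add: ideal_gen_least[OF JF_ideal])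
qed


lemma pow_monom:
  assumes "n \<ge> 3" "F \<in> bipyr_facets n"
  shows "Poly_Mapping.keys b \<subseteq> {..n + 1} \<Longrightarrow> m \<le> wt (n + 1) F b \<Longrightarrow> (\<forall>f\<in>F. m \<le> Poly_Mapping.lookup b f)
    \<Longrightarrow> (monom b :: 'k::field mpoly) \<in> ideal_pow (poly_ring (n + 1)) (SR_ideal_bipyr n) m"
proof (induction m arbitrary: b)
  case 0 then show ?case by (simp add: polyring_monom)
next
  case (Suc m)
  have fin: "finite F" and FN: "F \<subseteq> {..n+1}" using facet_props[OF assms] by auto
  have "1 \<le> wt (n + 1) F b" using Suc.prems(2) by simp
  then have "\<not> Poly_Mapping.keys b \<subseteq> F" using wt_pos_iff[OF Suc.prems(1)] by blast
  then obtain c where c: "c \<in> Poly_Mapping.keys b" "c \<notin> F" by blast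
  have cN: "c \<in> {..n+1}" using c Suc.prems(1) by blast
  define \<tau> where "\<tau> = insert c F"
  have ft: "finite \<tau>" using fin \<tau>_def by simp
  define b' where "b' = b - ind \<tau>"
  have lb': "Poly_Mapping.lookup b' j = Poly_Mapping.lookup b j - (if j \<in> \<tau> then 1 else 0)" for j
    unfolding b'_def by (simp add: lookup_minus lookup_ind[OF ft])
  have bb: "b = b' + ind \<tau>"
  proof (rule poly_mapping_eqI)
    fix j
    have "j \<in> \<tau> \<Longrightarrow> 1 \<le> Poly_Mapping.lookup b j"
      using c(1) Suc.prems(3) unfolding \<tau>_def by (auto simp: in_keys_iff)
    then show "Poly_Mapping.lookup b j = Poly_Mapping.lookup (b' + ind \<tau>) j"
      by (simp add: lookup_add lb' lookup_ind[OF ft])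
  qed
  have wt1: "wt (n + 1) F (ind \<tau>) = 1"
  proof -
    have "wt (n + 1) F (ind \<tau>) = (\<Sum>j\<in>{..n+1} - F. if j = c then 1 else 0)"
      unfolding wt_def lookup_ind[OF ft] by (rule sum.cong) (auto simp: \<tau>_def)
    also have "\<dots> = 1" using cN c(2) by simp
    finally show ?thesis .
  qed
  have "wt (n + 1) F b = wt (n + 1) F b' + 1" using wt1 bb wt_add by metis
  then have w: "m \<le> wt (n + 1) F b'" using Suc.prems(2) by simp
  have "Poly_Mapping.keys b' \<subseteq> Poly_Mapping.keys b"
    by (auto simp: in_keys_iff lb')
  then have kb': "Poly_Mapping.keys b' \<subseteq> {..n + 1}"
    using Suc.prems(1) by blast
  have fb': "\<forall>f\<in>F. m \<le> Poly_Mapping.lookup b' f" using Suc.prems(3) by (auto simp: lb' \<tau>_def)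
  have IH: "(monom b' :: 'k mpoly) \<in> ideal_pow (poly_ring (n + 1)) (SR_ideal_bipyr n) m"
    using Suc.IH[OF kb' w fb'] .
  have gen: "(sqfree_monom \<tau> :: 'k mpoly) \<in> SR_ideal_bipyr n"
  proof (rule gen_in_SR)
    show "\<tau> \<subseteq> {0..n + 1}" using FN cN unfolding \<tau>_def by auto
    show "\<not> bipyr_face n \<tau>" unfolding \<tau>_def by (rule insert_nonface[OF assms c(2)])
  qed
  have eq: "(monom b :: 'k mpoly) = monom b' * sqfree_monom \<tau>"
    unfolding sqfree_monom_ind monom_add using bb by simp
  have "(monom b :: 'k mpoly) \<in> {x * y |x y. x \<in> ideal_pow (poly_ring (n + 1)) (SR_ideal_bipyr n) m \<and> y \<in> SR_ideal_bipyr n}"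
    using IH gen eq by blast
  then show ?case using ideal_gen_sup by fastforce
qed


lemma sym_rel: "sym {(u, v). u \<in> S \<and> v \<in> S \<and> cyc_adj n u v}"
  unfolding sym_def cyc_adj_def by auto

lemma G1:
  assumes n: "n \<ge> 3" and i: "i \<in> {1..n}"
  shows "subtree_vertices n ({1..n} - {i, cyc_succ n i}) \<and> card ({1..n} - {i, cyc_succ n i}) = n - 2"
proof -
  define S where "S = {1..n} - {i, cyc_succ n i}"
  define Rel where "Rel = {(u, v). u \<in> S \<and> v \<in> S \<and> cyc_adj n u v}"
  have si: "cyc_succ n i = (if i = n then 1 else i + 1)" using cyc_succ_eq[OF i] .
  define \<phi> where "\<phi> t = (if i + t \<le> n then i + t else i + t - n)" for t
  have phiS: "\<phi> t \<in> S" if "t \<in> {2..n-1}" for t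
    using that i n unfolding \<phi>_def S_def si by auto
  have phistep: "(\<phi> t, \<phi> (Suc t)) \<in> Rel" if "t \<in> {2..n-2}" for t
  proof -
    have t1: "Suc t \<in> {2..n-1}" "t \<in> {2..n-1}" using that n by auto
    have p1: "\<phi> t \<in> {1..n}" using that i n unfolding \<phi>_def by auto
    have e: "\<phi> (Suc t) = cyc_succ n (\<phi> t)"
    proof -
      have "cyc_succ n (\<phi> t) = (if \<phi> t = n then 1 else \<phi> t + 1)" using p1 by (rule cyc_succ_eq)
      then show ?thesis using that i n unfolding \<phi>_def by auto
    qed
    have a: "\<phi> t \<in> S" "\<phi> (Suc t) \<in> S" using phiS t1 by blast+
    then have b: "\<phi> t \<in> {1..n}" "\<phi> (Suc t) \<in> {1..n}" unfolding S_def by auto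
    show ?thesis unfolding Rel_def cyc_adj_def using a b e by auto
  qed
  have chain: "(\<phi> t, \<phi> (t + d)) \<in> Rel\<^sup>*" if "t \<in> {2..n-1}" "t + d \<le> n - 1" for t d
    using that(2)
  proof (induction d)
    case 0 then show ?case by simp
  next
    case (Suc d)
    then have "(\<phi> t, \<phi> (t + d)) \<in> Rel\<^sup>*" by simp
    moreover have "(\<phi> (t + d), \<phi> (Suc (t + d))) \<in> Rel" using Suc.prems that by (intro phistep) auto
    ultimately show ?case by simp
  qed
  have surj: "\<exists>t\<in>{2..n-1}. x = \<phi> t" if "x \<in> S" for x
  proof (cases "x > i")
    case True
    then show ?thesis using that i n unfolding S_def si \<phi>_def
      by (intro bexI[of _ "x - i"]) (auto split: if_splits)
  next
    case False
    then show ?thesis using that i n unfolding S_def si \<phi>_def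
      by (intro bexI[of _ "x + n - i"]) (auto split: if_splits)
  qed
  have symR: "sym (Rel\<^sup>*)" unfolding Rel_def by (rule sym_rtrancl[OF sym_rel])
  have conn: "(x, y) \<in> Rel\<^sup>*" if xyS: "x \<in> S" "y \<in> S" for x y
  proof -
    obtain t where t: "t \<in> {2..n-1}" "x = \<phi> t" using surj xyS(1) by blast
    obtain t' where t': "t' \<in> {2..n-1}" "y = \<phi> t'" using surj xyS(2) by blast
    show ?thesis
    proof (cases "t \<le> t'")
      case True
      then show ?thesis using chain[OF t(1), of "t' - t"] t t' by auto
    next
      case False
      then have "(y, x) \<in> Rel\<^sup>*" using chain[OF t'(1), of "t - t'"] t t' by auto
      then show ?thesis using symR unfolding sym_def by blast
    qed
  qed
  have "2 \<in> {2..n-1}" using n by auto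
  then have ne: "S \<noteq> {}" using phiS[of 2] by blast
  have card: "card S = n - 2"
  proof -
    have "card {i, cyc_succ n i} = 2" using si i n by auto
    moreover have "{i, cyc_succ n i} \<subseteq> {1..n}" using si i n by auto
    ultimately show ?thesis unfolding S_def by (simp add: card_Diff_subset)
  qed
  have "subtree_vertices n S"
    unfolding subtree_vertices_def using ne conn unfolding Rel_def S_def by auto
  then show ?thesis using card unfolding S_def by simp
qed

lemma G2:
  assumes n: "n \<ge> 3" and S: "subtree_vertices n S" "card S = n - 2"
  shows "\<exists>i\<in>{1..n}. S = {1..n} - {i, cyc_succ n i}"
proof -
  define Rel where "Rel = {(u, v). u \<in> S \<and> v \<in> S \<and> cyc_adj n u v}"
  have Ssub: "S \<subseteq> {1..n}" and conn: "\<And>x y. x \<in> S \<Longrightarrow> y \<in> S \<Longrightarrow> (x, y) \<in> Rel\<^sup>*"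
    using S(1) unfolding subtree_vertices_def Rel_def by auto
  define D where "D = {1..n} - S"
  have SD: "S = {1..n} - D" unfolding D_def using Ssub by auto
  have "card D = 2" unfolding D_def using Ssub S(2) n by (simp add: card_Diff_subset finite_subset)
  then obtain u v where uv: "D = {u, v}" "u < v"
    by (auto simp: card_2_iff) (metis insert_commute linorder_neqE_nat)
  have uvr: "u \<in> {1..n}" "v \<in> {1..n}" using uv unfolding D_def by auto
  have uS: "u \<notin> S" "v \<notin> S" using uv unfolding D_def by auto
  show ?thesis
  proof (cases "v = u + 1")
    case True
    then show ?thesis using uv uvr SD cyc_succ_eq[OF uvr(1)] by (intro bexI[of _ u]) auto
  next
    case False
    note nadj = False
    show ?thesis
    proof (cases "u = 1 \<and> v = n")
      case True
      then show ?thesis using uv uvr SD cyc_succ_eq[of n n] n by (intro bexI[of _ n]) auto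
    next
      case False
      have aS: "u + 1 \<in> S" using nadj uv uvr SD by auto
      obtain b where b: "b \<in> S" "b < u \<or> b > v"
      proof (cases "u > 1")
        case True then show ?thesis using that[of 1] SD uv uvr by auto
      next
        case False then have "v < n" using \<open>\<not> (u = 1 \<and> v = n)\<close> uvr by auto
        then show ?thesis using that[of n] SD uv uvr n by auto
      qed
      have inv: "u < y \<and> y < v" if "(u + 1, y) \<in> Rel\<^sup>*" for y
        using that
      proof (induction rule: rtrancl_induct)
        case base then show ?case using nadj uv by auto
      next
        case (step y z)
        have yz: "y \<in> S" "z \<in> S" "cyc_adj n y z" using step.hyps(2) unfolding Rel_def by auto
        have y1: "y \<in> {1..n}" and z1: "z \<in> {1..n}" using yz Ssub by auto
        have "z \<noteq> u" "z \<noteq> v" using yz uS by auto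
        then show ?case using yz(3) step.IH uvr unfolding cyc_adj_def cyc_succ_eq[OF y1] cyc_succ_eq[OF z1]
          by (auto split: if_splits)
      qed
      have "u < b \<and> b < v" using inv conn[OF aS b(1)] by blast
      then show ?thesis using b(2) by auto
    qed
  qed
qed


lemma facet1: "i \<in> {1..n} \<Longrightarrow> {0, i, cyc_succ n i} \<in> bipyr_facets n"
  unfolding bipyr_facets_def by blast
lemma facet2: "i \<in> {1..n} \<Longrightarrow> {n + 1, i, cyc_succ n i} \<in> bipyr_facets n"
  unfolding bipyr_facets_def by blast

lemma wt_facet1:
  assumes "i \<in> {1..n}"
  shows "wt (n + 1) {0, i, cyc_succ n i} a = wn1 n ({1..n} - {i, cyc_succ n i}) a"
proof -
  have "{..n + 1} - {0, i, cyc_succ n i} = insert (n + 1) ({1..n} - {i, cyc_succ n i})"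
    using assms cyc_succ_eq[OF assms] by auto
  then show ?thesis unfolding wt_def wn1_def by (simp add: add.commute)
qed

lemma wt_facet2:
  assumes "i \<in> {1..n}"
  shows "wt (n + 1) {n + 1, i, cyc_succ n i} a = w0 n ({1..n} - {i, cyc_succ n i}) a"
proof -
  have "{..n + 1} - {n + 1, i, cyc_succ n i} = insert 0 ({1..n} - {i, cyc_succ n i})"
    using assms cyc_succ_eq[OF assms] by auto
  then show ?thesis unfolding wt_def w0_def by (simp add: add.commute)
qed

lemma dir1:
  assumes n: "n \<ge> 3" and F: "F \<in> bipyr_facets n"
    and H: "(monom a :: 'k::field mpoly) \<in> symbolic_power (poly_ring (n + 1)) (SR_ideal_bipyr n) m"
  shows "m \<le> wt (n + 1) F a"
proof -
  have "(JF (n + 1) F 1 :: 'k mpoly set) \<in> ass_primes (poly_ring (n + 1)) (SR_ideal_bipyr n)"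
    by (rule JF_ass[OF n F])
  then obtain s :: "'k mpoly" where s: "s \<in> poly_ring (n + 1)" "s \<notin> JF (n + 1) F 1"
    "s * monom a \<in> ideal_pow (poly_ring (n + 1)) (SR_ideal_bipyr n) m"
    using H unfolding symbolic_power_def by blast
  have inJ: "s * monom a \<in> JF (n + 1) F m" using s(3) pow_sub[OF n F] by blast
  obtain k where k: "k \<in> Poly_Mapping.keys s" "\<not> 1 \<le> wt (n + 1) F k"
    using s(1,2) unfolding JF_def by blast
  have "k + a \<in> Poly_Mapping.keys (s * monom a)" using k(1) by (simp add: keys_mult_monom)
  then have "m \<le> wt (n + 1) F (k + a)" using inJ unfolding JF_def by blast
  then show ?thesis using k(2) by (simp add: wt_add)
qed

lemma dir2:
  assumes n: "n \<ge> 3" and F: "F \<in> bipyr_facets n" and P: "P \<subseteq> JF (n + 1) F 1"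
    and a: "Poly_Mapping.keys a \<subseteq> {..n + 1}" and w: "m \<le> wt (n + 1) F a"
  shows "\<exists>s \<in> poly_ring (n + 1) - P. s * (monom a :: 'k::field mpoly) \<in> ideal_pow (poly_ring (n + 1)) (SR_ideal_bipyr n) m"
proof -
  have fin: "finite F" and FN: "F \<subseteq> {..n+1}" using facet_props[OF n F] by auto
  define e where "e = (\<Sum>f\<in>F. Poly_Mapping.single f m)"
  have le: "Poly_Mapping.lookup e j = (if j \<in> F then m else 0)" for j
    unfolding e_def using fin by (simp add: lookup_sum lookup_single when_def)
  have ke: "Poly_Mapping.keys e \<subseteq> F" by (auto simp: in_keys_iff le split: if_splits)
  have we: "wt (n + 1) F e = 0" unfolding wt_def by (simp add: le)
  have sR: "(monom e :: 'k mpoly) \<in> poly_ring (n + 1)" using ke FN by (intro polyring_monom) auto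
  have "(monom e :: 'k mpoly) \<notin> JF (n + 1) F 1"
    unfolding JF_def monom_def using we by auto
  then have sP: "(monom e :: 'k mpoly) \<notin> P" using P by blast
  have "(monom (e + a) :: 'k mpoly) \<in> ideal_pow (poly_ring (n + 1)) (SR_ideal_bipyr n) m"
  proof (rule pow_monom[OF n F])
    show "Poly_Mapping.keys (e + a) \<subseteq> {..n + 1}" using ke FN a by (auto simp: keys_add_nat)
    show "m \<le> wt (n + 1) F (e + a)" using w we by (simp add: wt_add)
    show "\<forall>f\<in>F. m \<le> Poly_Mapping.lookup (e + a) f" by (simp add: lookup_add le)
  qed
  then show ?thesis using sR sP by (intro bexI[of _ "monom e"]) (auto simp: monom_add)
qed

theorem proposition3p6:
  fixes n m :: nat and a :: "nat \<Rightarrow>\<^sub>0 nat"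
  assumes "n \<ge> 3"
    and "Poly_Mapping.keys a \<subseteq> {..n + 1}"
  shows "(monom a :: 'k::field mpoly) \<in> symbolic_power (poly_ring (n + 1)) (SR_ideal_bipyr n) m
    \<longleftrightarrow> (\<forall>S. subtree_vertices n S \<and> card S = n - 2 \<longrightarrow> min (w0 n S a) (wn1 n S a) \<ge> m)"
proof
  assume H: "(monom a :: 'k::field mpoly) \<in> symbolic_power (poly_ring (n + 1)) (SR_ideal_bipyr n) m"
  show "\<forall>S. subtree_vertices n S \<and> card S = n - 2 \<longrightarrow> min (w0 n S a) (wn1 n S a) \<ge> m"
  proof (intro allI impI)
    fix S assume S: "subtree_vertices n S \<and> card S = n - 2"
    then obtain i where i: "i \<in> {1..n}" "S = {1..n} - {i, cyc_succ n i}" using G2[OF assms(1)] by blast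
    have "m \<le> wt (n + 1) {0, i, cyc_succ n i} a" by (rule dir1[OF assms(1) facet1[OF i(1)] H])
    moreover have "m \<le> wt (n + 1) {n + 1, i, cyc_succ n i} a" by (rule dir1[OF assms(1) facet2[OF i(1)] H])
    ultimately show "min (w0 n S a) (wn1 n S a) \<ge> m"
      unfolding i(2) wt_facet1[OF i(1)] wt_facet2[OF i(1)] by simp
  qed
next
  assume H: "\<forall>S. subtree_vertices n S \<and> card S = n - 2 \<longrightarrow> min (w0 n S a) (wn1 n S a) \<ge> m"
  have aR: "(monom a :: 'k mpoly) \<in> poly_ring (n + 1)" by (rule polyring_monom[OF assms(2)])
  show "(monom a :: 'k::field mpoly) \<in> symbolic_power (poly_ring (n + 1)) (SR_ideal_bipyr n) m"
    unfolding symbolic_power_def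
  proof (intro CollectI conjI ballI)
    show "(monom a :: 'k mpoly) \<in> poly_ring (n + 1)" by (rule aR)
    fix P assume "P \<in> ass_primes (poly_ring (n + 1)) (SR_ideal_bipyr n :: 'k mpoly set)"
    then obtain F where F: "F \<in> bipyr_facets n" "P \<subseteq> JF (n + 1) F 1" using ass_sub[OF assms(1)] by blast
    have w: "m \<le> wt (n + 1) F a"
      using F(1)
    proof (cases rule: facet_cases)
      case (1 i)
      then show ?thesis using H G1[OF assms(1) 1(1)] wt_facet1[OF 1(1)] by fastforce
    next
      case (2 i)
      then show ?thesis using H G1[OF assms(1) 2(1)] wt_facet2[OF 2(1)] by fastforce
    qed
    show "\<exists>s \<in> poly_ring (n + 1) - P. s * monom a \<in> ideal_pow (poly_ring (n + 1)) (SR_ideal_bipyr n) m"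
      by (rule dir2[OF assms(1) F(1) F(2) assms(2) w])
  qed
qed

end
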